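(* For integers $s,t\ge 7$, $${\rm dim}_s(C_s\diamond C_t)=st-4\min\{\lfloor s/3\rfloor,\lfloor t/3\rfloor\}-r,$$ where $r=0$ if $\min\{s,t\}\equiv 0$ or $1 \pmod 3$; $r=1$ if $s=t$ and $\min\{s,t\}\equiv 2\pmod 3$; and $r=2$ if $s\neq t$ and $\min\{s,t\}\equiv 2\pmod 3$.
   Context: The modular product $G\diamond H$ has vertex set $V(G)\times V(H)$; distinct vertices $(g,h)$ and $(g',h')$ are adjacent iff ($g=g'$ and $hh'\in E(H)$), or ($gg'\in E(G)$ and $h=h'$), or ($gg'\in E(G)$ and $hh'\in E(H)$), or ($g\neq g'$, $h\neq h'$, $gg'\notin E(G)$ and $hh'\notin E(H)$). $C_n$ is the cycle on $n$ vertices. For a connected graph $X$, a vertex $z$ strongly resolves distinct vertices $x,y$ if $d_X(y,z)=d_X(y,x)+d_X(x,z)$ or $d_X(x,z)=d_X(x,y)+d_X(y,z)$; ${\rm dim}_s(X)$ is the minimum cardinality of a set $S\subseteq V(X)$ such that every pair of distinct vertices is strongly resolved by some vertex of $S$. *)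

theory Defs
  imports Main
begin

text \<open>A (simple) graph is given by a vertex set V and an adjacency relation E
  (assumed symmetric and irreflexive on V for the graphs we use).\<close>

inductive walk :: "'a set \<Rightarrow> ('a \<Rightarrow> 'a \<Rightarrow> bool) \<Rightarrow> 'a \<Rightarrow> nat \<Rightarrow> 'a \<Rightarrow> bool"
  for V E where
  walk_refl: "x \<in> V \<Longrightarrow> walk V E x 0 x"
| walk_step: "walk V E x n y \<Longrightarrow> z \<in> V \<Longrightarrow> E y z \<Longrightarrow> walk V E x (Suc n) z"

definition gdist :: "'a set \<Rightarrow> ('a \<Rightarrow> 'a \<Rightarrow> bool) \<Rightarrow> 'a \<Rightarrow> 'a \<Rightarrow> nat" where
  "gdist V E x y = (LEAST n. walk V E x n y)"

definition connected_graph :: "'a set \<Rightarrow> ('a \<Rightarrow> 'a \<Rightarrow> bool) \<Rightarrow> bool" where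
  "connected_graph V E \<longleftrightarrow> V \<noteq> {} \<and> (\<forall>x\<in>V. \<forall>y\<in>V. \<exists>n. walk V E x n y)"

definition strongly_resolves :: "'a set \<Rightarrow> ('a \<Rightarrow> 'a \<Rightarrow> bool) \<Rightarrow> 'a \<Rightarrow> 'a \<Rightarrow> 'a \<Rightarrow> bool" where
  "strongly_resolves V E z x y \<longleftrightarrow>
     gdist V E y z = gdist V E y x + gdist V E x z \<or>
     gdist V E x z = gdist V E x y + gdist V E y z"

definition strong_resolving_set :: "'a set \<Rightarrow> ('a \<Rightarrow> 'a \<Rightarrow> bool) \<Rightarrow> 'a set \<Rightarrow> bool" where
  "strong_resolving_set V E S \<longleftrightarrow> S \<subseteq> V \<and>
     (\<forall>x\<in>V. \<forall>y\<in>V. x \<noteq> y \<longrightarrow> (\<exists>z\<in>S. strongly_resolves V E z x y))"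

definition sdim :: "'a set \<Rightarrow> ('a \<Rightarrow> 'a \<Rightarrow> bool) \<Rightarrow> nat" where
  "sdim V E = (LEAST k. \<exists>S. strong_resolving_set V E S \<and> card S = k)"

definition cycle_V :: "nat \<Rightarrow> nat set" where
  "cycle_V n = {0..<n}"

definition cycle_E :: "nat \<Rightarrow> nat \<Rightarrow> nat \<Rightarrow> bool" where
  "cycle_E n i j \<longleftrightarrow> i < n \<and> j < n \<and> (j = (i + 1) mod n \<or> i = (j + 1) mod n) \<and> i \<noteq> j"

definition modprod_V :: "'a set \<Rightarrow> 'b set \<Rightarrow> ('a \<times> 'b) set" where
  "modprod_V VG VH = VG \<times> VH"

definition modprod_E :: "('a \<Rightarrow> 'a \<Rightarrow> bool) \<Rightarrow> ('b \<Rightarrow> 'b \<Rightarrow> bool)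
    \<Rightarrow> ('a \<times> 'b) \<Rightarrow> ('a \<times> 'b) \<Rightarrow> bool" where
  "modprod_E EG EH = (\<lambda>(g, h) (g', h').
     (g, h) \<noteq> (g', h') \<and>
     ((g = g' \<and> EH h h') \<or> (EG g g' \<and> h = h') \<or> (EG g g' \<and> EH h h') \<or>
      (g \<noteq> g' \<and> h \<noteq> h' \<and> \<not> EG g g' \<and> \<not> EH h h')))"

end

theory Submission
  imports Defs
begin


definition Ac :: "nat \<Rightarrow> nat \<Rightarrow> nat \<Rightarrow> bool" where
  "Ac n i j \<longleftrightarrow> i = j \<or> cycle_E n i j"

definition nx :: "nat \<Rightarrow> nat \<Rightarrow> nat" where "nx n i = (if Suc i = n then 0 else Suc i)"
definition pv :: "nat \<Rightarrow> nat \<Rightarrow> nat" where "pv n i = (if i = 0 then n - 1 else i - 1)"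

lemma modsuc: "i < n \<Longrightarrow> Suc i mod n = (if Suc i = n then 0 else Suc i)"
  by (cases "Suc i = n") auto

lemma Ac_iff:
  assumes "i < n" "j < n" "n \<ge> 3"
  shows "Ac n i j \<longleftrightarrow> (i = j \<or> j = i+1 \<or> i = j+1 \<or> (i+1 = n \<and> j = 0) \<or> (j+1 = n \<and> i = 0))"
  unfolding Ac_def cycle_E_def using assms by (auto simp: modsuc)

lemma Ac_sym: "Ac n i j = Ac n j i"
  unfolding Ac_def cycle_E_def by auto

lemma E_iff: "modprod_E (cycle_E s) (cycle_E t) (g,h) (g',h') \<longleftrightarrow>
   (g,h) \<noteq> (g',h') \<and> (Ac s g g' \<longleftrightarrow> Ac t h h')"
  unfolding modprod_E_def Ac_def by (auto simp: cycle_E_def)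

lemma far:
  assumes "n \<ge> 7" "a < n" "b < n"
  shows "\<exists>c<n. \<not> Ac n a c \<and> \<not> Ac n b c"
proof (rule ccontr)
  assume "\<not> ?thesis"
  then have sub: "{0..<n} \<subseteq> set [a, nx n a, pv n a, b, nx n b, pv n b]"
    using assms by (auto simp: Ac_iff nx_def pv_def)
  have "n = card {0..<n}" by simp
  also have "\<dots> \<le> card (set [a, nx n a, pv n a, b, nx n b, pv n b])"
    by (rule card_mono[OF _ sub]) simp
  also have "\<dots> \<le> 6" using card_length[of "[a, nx n a, pv n a, b, nx n b, pv n b]"] by simp
  finally show False using assms by simp
qed

lemma diffnb:
  assumes "n \<ge> 5" "h < n" "h' < n" "h \<noteq> h'"
  shows "\<exists>c<n. Ac n h' c \<and> \<not> Ac n h c"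
proof -
  consider "h' = h+1" | "h = h'+1" | "h+1 = n \<and> h' = 0" | "h'+1 = n \<and> h = 0" | "\<not> Ac n h h'"
    using assms Ac_iff[of h n h'] by linarith
  then show ?thesis
  proof cases
    case 1 then show ?thesis using assms
      by (intro exI[of _ "nx n h'"]) (auto simp: Ac_iff nx_def)
  next
    case 2 then show ?thesis using assms
      by (intro exI[of _ "pv n h'"]) (auto simp: Ac_iff pv_def)
  next
    case 3 then show ?thesis using assms
      by (intro exI[of _ "nx n h'"]) (auto simp: Ac_iff nx_def)
  next
    case 4 then show ?thesis using assms
      by (intro exI[of _ "pv n h'"]) (auto simp: Ac_iff pv_def)
  next
    case 5 then show ?thesis using assms
      by (intro exI[of _ h']) (auto simp: Ac_iff)
  qed
qed


lemma walk0: "walk V E x 0 y \<Longrightarrow> x = y"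
  by (erule walk.cases) auto

lemma walk1: "walk V E x (Suc 0) y \<Longrightarrow> E x y"
  by (erule walk.cases) (auto dest: walk0)

lemma Ac_refl[simp]: "Ac n a a" by (simp add: Ac_def)

lemma Vprod: "modprod_V (cycle_V s) (cycle_V t) = {0..<s} \<times> {0..<t}"
  by (simp add: modprod_V_def cycle_V_def)

lemma common_nb:
  assumes "s \<ge> 7" "t \<ge> 7" "g < s" "g' < s" "h < t" "h' < t"
  shows "\<exists>z \<in> {0..<s} \<times> {0..<t}. modprod_E (cycle_E s) (cycle_E t) (g,h) z \<and> modprod_E (cycle_E s) (cycle_E t) z (g',h')"
proof -
  obtain a where a: "a < s" "\<not> Ac s g a" "\<not> Ac s g' a" using far[of s g g'] assms by auto
  obtain b where b: "b < t" "\<not> Ac t h b" "\<not> Ac t h' b" using far[of t h h'] assms by auto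
  show ?thesis using a b by (intro bexI[of _ "(a,b)"]) (auto simp: E_iff Ac_sym)
qed

lemma gdist_val:
  assumes "s \<ge> 7" "t \<ge> 7" "x \<in> {0..<s} \<times> {0..<t}" "y \<in> {0..<s} \<times> {0..<t}"
  shows "gdist ({0..<s} \<times> {0..<t}) (modprod_E (cycle_E s) (cycle_E t)) x y =
     (if x = y then 0 else if modprod_E (cycle_E s) (cycle_E t) x y then 1 else 2)"
proof -
  let ?V = "{0..<s} \<times> {0..<t}" and ?E = "modprod_E (cycle_E s) (cycle_E t)"
  have w0: "walk ?V ?E x 0 x" using assms by (simp add: walk_refl)
  show ?thesis
  proof (cases "x = y")
    case True then show ?thesis unfolding gdist_def using w0 by auto
  next
    case ne: False
    show ?thesis
    proof (cases "?E x y")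
      case True
      have "walk ?V ?E x (Suc 0) y" using walk_step[OF w0 _ True] assms by auto
      have "(LEAST n. walk ?V ?E x n y) = 1"
      proof (rule Least_equality)
        fix n assume wn: "walk ?V ?E x n y"
        show "1 \<le> n"
        proof (rule ccontr)
          assume "\<not> 1 \<le> n"
          then have "n = 0" by linarith
          then show False using wn ne walk0 by metis
        qed
      qed (use \<open>walk ?V ?E x (Suc 0) y\<close> in simp)
      then show ?thesis using True ne unfolding gdist_def by simp
    next
      case False
      obtain g h g' h' where xy: "x = (g,h)" "y = (g',h')" by fastforce
      obtain z where z: "z \<in> ?V" "?E x z" "?E z y"
        using common_nb[of s t g g' h h'] assms xy by auto
      have "walk ?V ?E x (Suc 0) z" using walk_step[OF w0 z(1) z(2)] .
      then have "walk ?V ?E x (Suc (Suc 0)) y" using walk_step[of ?V ?E x "Suc 0" z y] assms(4) z(3) by blast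
      note w2 = this
      have n0: "\<not> walk ?V ?E x 0 y" using ne walk0 by metis
      have n1: "\<not> walk ?V ?E x (Suc 0) y" using False walk1 by metis
      have "(LEAST n. walk ?V ?E x n y) = 2"
      proof (rule Least_equality)
        show "walk ?V ?E x 2 y" using w2 by (simp add: numeral_2_eq_2)
        fix n assume wn: "walk ?V ?E x n y"
        show "2 \<le> n"
        proof (rule ccontr)
          assume "\<not> 2 \<le> n"
          then have "n = 0 \<or> n = Suc 0" by linarith
          then show False using wn n0 n1 by auto
        qed
      qed
      then show ?thesis using False ne unfolding gdist_def by simp
    qed
  qed
qed

lemma resolver:
  assumes "s \<ge> 7" "t \<ge> 7" "x \<in> {0..<s} \<times> {0..<t}" "y \<in> {0..<s} \<times> {0..<t}"
    "modprod_E (cycle_E s) (cycle_E t) x y"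
  shows "\<exists>z \<in> {0..<s} \<times> {0..<t}. modprod_E (cycle_E s) (cycle_E t) x z \<and> z \<noteq> y \<and>
     \<not> modprod_E (cycle_E s) (cycle_E t) y z"
proof -
  obtain g h g' h' where xy: "x = (g,h)" "y = (g',h')" by fastforce
  have ne: "x \<noteq> y" using assms(5) xy by (simp add: E_iff)
  show ?thesis
  proof (cases "h = h'")
    case False
    obtain c where c: "c < t" "Ac t h' c" "\<not> Ac t h c" using diffnb[of t h h'] False assms xy by auto
    obtain a where a: "a < s" "\<not> Ac s g a" "\<not> Ac s g' a" using far[of s g g'] assms xy by auto
    have "a \<noteq> g'" using a by (auto simp: Ac_def)
    then show ?thesis using a c xy by (intro bexI[of _ "(a,c)"]) (auto simp: E_iff)
  next
    case True
    then have gg: "g \<noteq> g'" using ne xy by auto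
    obtain c where c: "c < s" "Ac s g' c" "\<not> Ac s g c" using diffnb[of s g g'] gg assms xy by auto
    obtain b where b: "b < t" "\<not> Ac t h b" using far[of t h h] assms xy by auto
    have "b \<noteq> h'" using b True by (auto simp: Ac_def)
    then show ?thesis using b c xy True by (intro bexI[of _ "(c,b)"]) (auto simp: E_iff)
  qed
qed

lemma E_irr: "\<not> modprod_E (cycle_E s) (cycle_E t) x x"
  by (cases x) (simp add: E_iff)

lemma E_sym: "modprod_E (cycle_E s) (cycle_E t) x y = modprod_E (cycle_E s) (cycle_E t) y x"
  by (cases x, cases y) (auto simp: E_iff Ac_sym)

lemma srs_iff:
  assumes "s \<ge> 7" "t \<ge> 7" "S \<subseteq> {0..<s} \<times> {0..<t}"
  shows "strong_resolving_set ({0..<s} \<times> {0..<t}) (modprod_E (cycle_E s) (cycle_E t)) S \<longleftrightarrow>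
    (\<forall>x\<in>({0..<s} \<times> {0..<t}) - S. \<forall>y\<in>({0..<s} \<times> {0..<t}) - S. x \<noteq> y \<longrightarrow> modprod_E (cycle_E s) (cycle_E t) x y)"
    (is "?L \<longleftrightarrow> ?R")
proof
  let ?V = "{0..<s} \<times> {0..<t}" and ?E = "modprod_E (cycle_E s) (cycle_E t)"
  note gd = gdist_val[OF assms(1,2)]
  assume L: ?L
  show ?R
  proof (intro ballI impI)
    fix x y assume x: "x \<in> ?V - S" and y: "y \<in> ?V - S" and ne: "x \<noteq> y"
    obtain z where z: "z \<in> S" "strongly_resolves ?V ?E z x y"
    proof -
      have "x \<in> ?V" "y \<in> ?V" using x y by auto
      then show ?thesis using L ne that unfolding strong_resolving_set_def by blast
    qed
    have zV: "z \<in> ?V" using z assms by auto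
    have "z \<noteq> x" "z \<noteq> y" using z x y by auto
    show "?E x y"
    proof (rule ccontr)
      assume nE: "\<not> ?E x y"
      then have "\<not> ?E y x" using E_sym by metis
      then have d1: "gdist ?V ?E y x = 2" using gd[of y x] x y ne by auto
      have d2: "gdist ?V ?E x y = 2" using gd[of x y] x y ne nE by auto
      have d3: "gdist ?V ?E y z \<le> 2" using gd[of y z] zV y by auto
      have d4: "gdist ?V ?E x z \<ge> 1" using gd[of x z] zV x \<open>z \<noteq> x\<close> by auto
      have d5: "gdist ?V ?E x z \<le> 2" using gd[of x z] zV x by auto
      have d6: "gdist ?V ?E y z \<ge> 1" using gd[of y z] zV y \<open>z \<noteq> y\<close> by auto
      show False using z(2) d1 d2 d3 d4 d5 d6 unfolding strongly_resolves_def by linarith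
    qed
  qed
next
  let ?V = "{0..<s} \<times> {0..<t}" and ?E = "modprod_E (cycle_E s) (cycle_E t)"
  note gd = gdist_val[OF assms(1,2)]
  assume R: ?R
  show ?L unfolding strong_resolving_set_def
  proof (intro conjI ballI impI)
    show "S \<subseteq> ?V" using assms by simp
    fix x y assume x: "x \<in> ?V" and y: "y \<in> ?V" and ne: "x \<noteq> y"
    show "\<exists>z\<in>S. strongly_resolves ?V ?E z x y"
    proof (cases "x \<in> S")
      case True
      have "gdist ?V ?E x x = 0" using gd[of x x] x by simp
      then have "strongly_resolves ?V ?E x x y" unfolding strongly_resolves_def by simp
      then show ?thesis using True by blast
    next
      case xS: False
      show ?thesis
      proof (cases "y \<in> S")
        case True
        have "gdist ?V ?E y y = 0" using gd[of y y] y by simp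
        then have "strongly_resolves ?V ?E y x y" unfolding strongly_resolves_def by simp
        then show ?thesis using True by blast
      next
        case yS: False
        have Exy: "?E x y" using R x y xS yS ne by auto
        obtain z where z: "z \<in> ?V" "?E x z" "z \<noteq> y" "\<not> ?E y z"
          using resolver[OF assms(1,2) x y Exy] by auto
        have zS: "z \<in> S" using R z y yS by (metis DiffI)
        have "z \<noteq> x" using z(2) E_irr by metis
        have "gdist ?V ?E y z = gdist ?V ?E y x + gdist ?V ?E x z"
        proof -
          have "\<not> ?E y z" "z \<noteq> y" using z by auto
          then have "gdist ?V ?E y z = 2" using gd[of y z] z(1) y by simp
          moreover have "gdist ?V ?E y x = 1" using gd[of y x] x y ne E_sym[of s t y x] Exy by simp
          moreover have "gdist ?V ?E x z = 1" using gd[of x z] x z(1,2) \<open>z \<noteq> x\<close> by simp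
          ultimately show ?thesis by simp
        qed
        then show ?thesis using zS unfolding strongly_resolves_def by auto
      qed
    qed
  qed
qed


definition Lf :: "nat \<Rightarrow> nat" where
  "Lf n = 4 * ((n+1) div 3) + (if n mod 3 = 1 then 2 else 0)"
definition Mf :: "nat \<Rightarrow> nat" where
  "Mf n = 4 * ((n+1) div 3) + (if n mod 3 = 1 then 1 else 0)"

lemma Lf3: "Lf (n+3) = 4 + Lf n"
proof -
  have "(n+3+1) div 3 = (n+1) div 3 + 1" by simp
  moreover have "(n+3) mod 3 = n mod 3" by simp
  ultimately show ?thesis unfolding Lf_def by simp
qed
lemma Lf12: "Lf n \<le> Lf (n+1) \<and> 2 + Lf n \<le> Lf (n+2)"
proof (induction n rule: less_induct)
  case (less n)
  show ?case
  proof (cases "n < 3")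
    case True
    then have "n = 0 \<or> n = 1 \<or> n = 2" by linarith
    then show ?thesis by (auto simp: Lf_def)
  next
    case False
    define m where "m = n - 3"
    have n: "n = m + 3" using False m_def by simp
    have IH: "Lf m \<le> Lf (m+1) \<and> 2 + Lf m \<le> Lf (m+2)" using less n by simp
    have a: "Lf (m+1+3) = 4 + Lf (m+1)" "Lf (m+2+3) = 4 + Lf (m+2)" "Lf (m+3) = 4 + Lf m" by (rule Lf3)+
    have b: "m+3+1 = m+1+3" "m+3+2 = m+2+3" by simp_all
    show ?thesis unfolding n b a using IH by simp
  qed
qed
lemma Mf3: "Mf (n+3) = 4 + Mf n"
proof -
  have "(n+3+1) div 3 = (n+1) div 3 + 1" by simp
  moreover have "(n+3) mod 3 = n mod 3" by simp
  ultimately show ?thesis unfolding Mf_def by simp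
qed
lemma Mf12: "Mf n \<le> Mf (n+1) \<and> 1 + Mf n \<le> Mf (n+2)"
proof (induction n rule: less_induct)
  case (less n)
  show ?case
  proof (cases "n < 3")
    case True
    then have "n = 0 \<or> n = 1 \<or> n = 2" by linarith
    then show ?thesis by (auto simp: Mf_def)
  next
    case False
    define m where "m = n - 3"
    have n: "n = m + 3" using False m_def by simp
    have IH: "Mf m \<le> Mf (m+1) \<and> 1 + Mf m \<le> Mf (m+2)" using less n by simp
    have a: "Mf (m+1+3) = 4 + Mf (m+1)" "Mf (m+2+3) = 4 + Mf (m+2)" "Mf (m+3) = 4 + Mf m" by (rule Mf3)+
    have b: "m+3+1 = m+1+3" "m+3+2 = m+2+3" by simp_all
    show ?thesis unfolding n b a using IH by simp
  qed
qed

lemma Lf3': "Lf (Suc (Suc (Suc n))) = 4 + Lf n" using Lf3[of n] by (simp add: numeral_3_eq_3)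
lemma Mf3': "Mf (Suc (Suc (Suc n))) = 4 + Mf n" using Mf3[of n] by (simp add: numeral_3_eq_3)

lemma split1: "(\<Sum>i<Suc n. (x::nat\<Rightarrow>nat) (a+i)) = x a + (\<Sum>i<n. x (Suc a + i))"
  by (subst sum.lessThan_Suc_shift) simp

lemma split3: "(\<Sum>i<Suc (Suc (Suc n)). (x::nat\<Rightarrow>nat) (a+i)) = x a + x (Suc a) + x (Suc (Suc a)) + (\<Sum>i<n. x (Suc (Suc (Suc a)) + i))"
  by (simp only: split1 add.assoc)

lemma Lbound:
  fixes x :: "nat \<Rightarrow> nat"
  assumes le2: "\<And>i. x i \<le> 2"
    and F2: "\<And>i. 0 < x i \<Longrightarrow> 0 < x (Suc i) \<Longrightarrow> 0 < x (Suc (Suc i)) \<Longrightarrow>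
        x i = 1 \<and> x (Suc i) = 1 \<and> x (Suc (Suc i)) = 1"
  shows "(\<Sum>i<n. x (a+i)) \<le> Lf n"
proof (induction n arbitrary: a rule: less_induct)
  case (less n)
  show ?case
  proof (cases "n < 3")
    case True
    then consider "n = 0" | "n = 1" | "n = 2" by linarith
    then show ?thesis
    proof cases
      case 1 then show ?thesis by simp
    next
      case 2 then show ?thesis using le2[of a] by (simp add: Lf_def)
    next
      case 3 then show ?thesis using le2[of a] le2[of "Suc a"]
        by (simp add: Lf_def numeral_2_eq_2)
    qed
  next
    case False
    define k where "k = n - 3"
    have k: "n = Suc (Suc (Suc k))" using False k_def by simp
    have L1: "Lf (n-1) \<le> Lf n" "2 + Lf (n-2) \<le> Lf n" "4 + Lf k \<le> Lf n"
      using k Lf12[of "Suc (Suc k)"] Lf12[of "Suc k"] Lf3'[of k] by simp_all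
    have S: "(\<Sum>i<n. x (a+i)) = x a + x (Suc a) + x (Suc (Suc a)) + (\<Sum>i<k. x (Suc (Suc (Suc a)) + i))"
      using k split3 by simp
    have S1: "(\<Sum>i<n. x (a+i)) = x a + (\<Sum>i<n-1. x (Suc a + i))"
      using k split1 by simp
    have S2: "(\<Sum>i<n. x (a+i)) = x a + x (Suc a) + (\<Sum>i<n-2. x (Suc (Suc a) + i))"
      using k split1[where n="Suc k" and x=x and a="Suc a"] split1[where n="Suc (Suc k)" and x=x and a=a] by simp
    have IH1: "(\<Sum>i<n-1. x (Suc a + i)) \<le> Lf (n-1)" by (rule less.IH) (use k in simp)
    have IH2: "(\<Sum>i<n-2. x (Suc (Suc a) + i)) \<le> Lf (n-2)" by (rule less.IH) (use k in simp)
    have IH3: "(\<Sum>i<k. x (Suc (Suc (Suc a)) + i)) \<le> Lf k" by (rule less.IH) (use k in simp)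
    consider "x a = 0" | "0 < x a" "x (Suc a) = 0" | "0 < x a" "0 < x (Suc a)" "x (Suc (Suc a)) = 0"
      | "0 < x a" "0 < x (Suc a)" "0 < x (Suc (Suc a))" by linarith
    then show ?thesis
    proof cases
      case 1 then show ?thesis using S1 IH1 L1 by linarith
    next
      case 2 then show ?thesis using S2 IH2 L1 le2[of a] by linarith
    next
      case 3 then show ?thesis using S IH3 L1 le2[of a] le2[of "Suc a"] by linarith
    next
      case 4 then show ?thesis using S IH3 L1 F2[of a] by linarith
    qed
  qed
qed

lemma Mbound:
  fixes x :: "nat \<Rightarrow> nat"
  assumes le2: "\<And>i. x i \<le> 2"
    and F2: "\<And>i. 0 < x i \<Longrightarrow> 0 < x (Suc i) \<Longrightarrow> 0 < x (Suc (Suc i)) \<Longrightarrow>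
        x i = 1 \<and> x (Suc i) = 1 \<and> x (Suc (Suc i)) = 1"
    and NI: "\<And>i. x (Suc i) = 2 \<Longrightarrow> 0 < x i \<or> 0 < x (Suc (Suc i))"
  shows "x a = 2 \<longrightarrow> 0 < x (Suc a) \<Longrightarrow> x (a + n) = 0 \<Longrightarrow> (\<Sum>i<n. x (a+i)) \<le> Mf n"
proof (induction n arbitrary: a rule: less_induct)
  case (less n)
  show ?case
  proof (cases "n < 3")
    case True
    then consider "n = 0" | "n = 1" | "n = 2" by linarith
    then show ?thesis
    proof cases
      case 1 then show ?thesis by simp
    next
      case 2 then show ?thesis using le2[of a] less.prems by (cases "x a = 2") (auto simp: Mf_def)
    next
      case 3 then show ?thesis using le2[of a] le2[of "Suc a"]
        by (simp add: Mf_def numeral_2_eq_2)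
    qed
  next
    case False
    define k where "k = n - 3"
    have k: "n = Suc (Suc (Suc k))" using False k_def by simp
    have L1: "Mf (n-1) \<le> Mf n" "1 + Mf (n-2) \<le> Mf n" "4 + Mf (n-3) \<le> Mf n"
      using k Mf12[of "Suc (Suc k)"] Mf12[of "Suc k"] Mf3'[of k] by simp_all
    have S: "(\<Sum>i<n. x (a+i)) = x a + x (Suc a) + x (Suc (Suc a)) + (\<Sum>i<k. x (Suc (Suc (Suc a)) + i))"
      using k split3 by simp
    have S1: "(\<Sum>i<n. x (a+i)) = x a + (\<Sum>i<n-1. x (Suc a + i))"
      using k split1 by simp
    have S2: "(\<Sum>i<n. x (a+i)) = x a + x (Suc a) + (\<Sum>i<n-2. x (Suc (Suc a) + i))"
      using k split1[where n="Suc k" and x=x and a="Suc a"] split1[where n="Suc (Suc k)" and x=x and a=a] by simp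
    have e1: "x (Suc a + (n-1)) = 0" using less.prems k by simp
    have e2: "x (Suc (Suc a) + (n-2)) = 0" using less.prems k by simp
    have e3: "x (Suc (Suc (Suc a)) + k) = 0" using less.prems k by simp
    consider "x a = 0" | "0 < x a" "x (Suc a) = 0" | "0 < x a" "0 < x (Suc a)" "x (Suc (Suc a)) = 0"
      | "0 < x a" "0 < x (Suc a)" "0 < x (Suc (Suc a))" by linarith
    then show ?thesis
    proof cases
      case 1
      have bd: "x (Suc a) = 2 \<longrightarrow> 0 < x (Suc (Suc a))" using NI[of a] 1 by auto
      have "(\<Sum>i<n-1. x (Suc a + i)) \<le> Mf (n-1)" by (rule less.IH) (use k e1 bd in auto)
      then show ?thesis using S1 L1 1 by linarith
    next
      case 2
      have xa: "x a \<le> 1" using 2 less.prems(1) le2[of a] by auto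
      have bd: "x (Suc (Suc a)) = 2 \<longrightarrow> 0 < x (Suc (Suc (Suc a)))" using NI[of "Suc a"] 2 by auto
      have "(\<Sum>i<n-2. x (Suc (Suc a) + i)) \<le> Mf (n-2)" by (rule less.IH) (use k e2 bd in auto)
      then show ?thesis using S2 L1 xa 2 by linarith
    next
      case 3
      have bd: "x (Suc (Suc (Suc a))) = 2 \<longrightarrow> 0 < x (Suc (Suc (Suc (Suc a))))" using NI[of "Suc (Suc a)"] 3 by auto
      have "(\<Sum>i<k. x (Suc (Suc (Suc a)) + i)) \<le> Mf (n-3)" using less.IH[of k "Suc (Suc (Suc a))"] k e3 bd by simp
      then show ?thesis using S L1 le2[of a] le2[of "Suc a"] 3 by linarith
    next
      case 4
      have "x (Suc (Suc (Suc a))) \<noteq> 2" using F2[of "Suc a"] 4 by fastforce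
      then have bd: "x (Suc (Suc (Suc a))) = 2 \<longrightarrow> 0 < x (Suc (Suc (Suc (Suc a))))" by simp
      have "(\<Sum>i<k. x (Suc (Suc (Suc a)) + i)) \<le> Mf (n-3)" using less.IH[of k "Suc (Suc (Suc a))"] k e3 bd by simp
      then show ?thesis using S L1 F2[of a] 4 by linarith
    qed
  qed
qed


lemma Ac_refl'[simp]: "Ac n a a" by (simp add: Ac_def)

definition isclq :: "nat \<Rightarrow> nat \<Rightarrow> (nat \<times> nat) set \<Rightarrow> bool" where
  "isclq s t K \<longleftrightarrow> K \<subseteq> {0..<s} \<times> {0..<t} \<and>
     (\<forall>p\<in>K. \<forall>q\<in>K. p \<noteq> q \<longrightarrow> (Ac s (fst p) (fst q) \<longleftrightarrow> Ac t (snd p) (snd q)))"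

lemma clq_Ac: "isclq s t K \<Longrightarrow> (g,h) \<in> K \<Longrightarrow> (g',h') \<in> K \<Longrightarrow> (g,h) \<noteq> (g',h') \<Longrightarrow>
   Ac s g g' \<longleftrightarrow> Ac t h h'"
  unfolding isclq_def by force

lemma clq_sub: "isclq s t K \<Longrightarrow> (g,h) \<in> K \<Longrightarrow> g < s \<and> h < t"
  unfolding isclq_def by auto

lemma three_Ac:
  assumes "t \<ge> 4" "a < t" "b < t" "c < t" "a \<noteq> b" "b \<noteq> c" "a \<noteq> c"
    "Ac t a b" "Ac t b c" "Ac t a c"
  shows False
  using assms by (simp add: Ac_iff) arith

lemma cycA:
  assumes "t \<ge> 5" "h0 < t" "h1 < t" "h2 < t" "h1' < t"
    "Ac t h0 h1" "Ac t h1 h2" "\<not> Ac t h0 h2" "Ac t h1 h1'" "h1 \<noteq> h1'" "Ac t h0 h1'" "Ac t h1' h2"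
  shows False
proof -
  have e: "Ac t x y \<longleftrightarrow> (x = y \<or> y = x+1 \<or> x = y+1 \<or> (x+1 = t \<and> y = 0) \<or> (y+1 = t \<and> x = 0))"
    if "x < t" "y < t" for x y using Ac_iff[OF that] assms by simp
  note f = e[OF assms(2,3)] e[OF assms(3,4)] e[OF assms(2,4)] e[OF assms(3,5)] e[OF assms(2,5)] e[OF assms(5,4)]
  show False using assms f by auto
qed

lemma cycB:
  assumes "t \<ge> 5" "h0 < t" "h1 < t" "h2 < t" "h0' < t"
    "Ac t h0 h1" "Ac t h1 h2" "\<not> Ac t h0 h2" "h0 \<noteq> h0'" "Ac t h0 h0'" "Ac t h0' h1" "\<not> Ac t h0' h2"
  shows False
proof -
  have e: "Ac t x y \<longleftrightarrow> (x = y \<or> y = x+1 \<or> x = y+1 \<or> (x+1 = t \<and> y = 0) \<or> (y+1 = t \<and> x = 0))"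
    if "x < t" "y < t" for x y using Ac_iff[OF that] assms by simp
  note f = e[OF assms(2,3)] e[OF assms(3,4)] e[OF assms(2,4)] e[OF assms(2,5)] e[OF assms(5,3)] e[OF assms(5,4)]
  show False using assms f by auto
qed

lemma gside:
  assumes "s \<ge> 5"
  shows "g mod s \<noteq> Suc g mod s \<and> Suc g mod s \<noteq> Suc (Suc g) mod s \<and> g mod s \<noteq> Suc (Suc g) mod s \<and>
    Ac s (g mod s) (Suc g mod s) \<and> Ac s (Suc g mod s) (Suc (Suc g) mod s) \<and> \<not> Ac s (g mod s) (Suc (Suc g) mod s)"
proof -
  have a: "g mod s < s" using assms by simp
  have b: "Suc g mod s = (if Suc (g mod s) = s then 0 else Suc (g mod s))" by (rule mod_Suc)
  have c: "Suc (Suc g) mod s = (if Suc (Suc g mod s) = s then 0 else Suc (Suc g mod s))" by (rule mod_Suc)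
  have b': "Suc g mod s < s" "Suc (Suc g) mod s < s" using assms by simp_all
  show ?thesis using a b c b' assms by (simp add: Ac_iff)
qed



lemma fib_le2:
  assumes K: "isclq s t K" and t: "t \<ge> 4"
  shows "card {h. (g,h) \<in> K} \<le> 2"
proof (rule ccontr)
  let ?F = "{h. (g,h) \<in> K}"
  assume "\<not> ?thesis"
  then have c3: "Suc 2 \<le> card ?F" by simp
  have "\<exists>a B. ?F = insert a B \<and> a \<notin> B \<and> 2 \<le> card B \<and> finite B"
    using card_le_Suc_iff[of 2 ?F] c3 by blast
  then obtain a B where aB: "?F = insert a B" "a \<notin> B" "2 \<le> card B" "finite B" by blast
  have c2: "Suc 1 \<le> card B" using aB(3) by simp
  have "\<exists>b C. B = insert b C \<and> b \<notin> C \<and> 1 \<le> card C \<and> finite C"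
    using card_le_Suc_iff[of 1 B] c2 by blast
  then obtain b C where bC: "B = insert b C" "b \<notin> C" "Suc 0 \<le> card C" "finite C" by auto
  have "C \<noteq> {}" using bC(3) by auto
  then obtain c where c: "c \<in> C" by blast
  have mem: "(g,a) \<in> K" "(g,b) \<in> K" "(g,c) \<in> K" using aB bC c by blast+
  have ne: "a \<noteq> b" "b \<noteq> c" "a \<noteq> c" using aB bC c by auto
  have lt: "a < t" "b < t" "c < t" using mem clq_sub[OF K] by blast+
  have "Ac t a b" using clq_Ac[OF K mem(1) mem(2)] ne by simp
  moreover have "Ac t b c" using clq_Ac[OF K mem(2) mem(3)] ne by simp
  moreover have "Ac t a c" using clq_Ac[OF K mem(1) mem(3)] ne by simp
  ultimately
  show False using three_Ac[OF t lt ne] by blast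
qed


lemma F2:
  assumes K: "isclq s t K" and s: "s \<ge> 5" and t: "t \<ge> 5"
    and pos: "0 < card {h. (g mod s, h) \<in> K}" "0 < card {h. (Suc g mod s, h) \<in> K}"
      "0 < card {h. (Suc (Suc g) mod s, h) \<in> K}"
  shows "card {h. (g mod s, h) \<in> K} = 1 \<and> card {h. (Suc g mod s, h) \<in> K} = 1 \<and>
      card {h. (Suc (Suc g) mod s, h) \<in> K} = 1"
proof -
  define a where "a = g mod s"
  define b where "b = Suc g mod s"
  define c where "c = Suc (Suc g) mod s"
  have gs: "a \<noteq> b" "b \<noteq> c" "a \<noteq> c" "Ac s a b" "Ac s b c" "\<not> Ac s a c"
    using gside[OF s, of g] unfolding a_def b_def c_def by auto
  obtain h0 where h0: "(a,h0) \<in> K" using pos(1) unfolding a_def card_gt_0_iff by auto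
  obtain h1 where h1: "(b,h1) \<in> K" using pos(2) unfolding b_def card_gt_0_iff by auto
  obtain h2 where h2: "(c,h2) \<in> K" using pos(3) unfolding c_def card_gt_0_iff by auto
  have lt: "h0 < t" "h1 < t" "h2 < t" using h0 h1 h2 clq_sub[OF K] by blast+
  have A01: "Ac t h0 h1" using clq_Ac[OF K h0 h1] gs by auto
  have A12: "Ac t h1 h2" using clq_Ac[OF K h1 h2] gs by auto
  have A02: "\<not> Ac t h0 h2" using clq_Ac[OF K h0 h2] gs by auto
  have Fb: "{h. (b,h) \<in> K} = {h1}"
  proof -
    have "h = h1" if hK: "(b,h) \<in> K" for h
    proof (rule ccontr)
      assume ne: "h \<noteq> h1"
      have ht: "h < t" using hK clq_sub[OF K] by blast
      have f1: "Ac t h1 h" using clq_Ac[OF K h1 hK] ne by simp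
      have f2: "Ac t h0 h" using clq_Ac[OF K h0 hK] gs by simp
      have f3: "Ac t h h2" using clq_Ac[OF K hK h2] gs by simp
      show False by (rule cycA[OF t lt(1,2,3) ht A01 A12 A02 f1 ne[symmetric] f2 f3])
    qed
    then show ?thesis using h1 by blast
  qed
  have Fa: "{h. (a,h) \<in> K} = {h0}"
  proof -
    have "h = h0" if hK: "(a,h) \<in> K" for h
    proof (rule ccontr)
      assume ne: "h \<noteq> h0"
      have ht: "h < t" using hK clq_sub[OF K] by blast
      have f1: "Ac t h0 h" using clq_Ac[OF K h0 hK] ne by simp
      have f2: "Ac t h h1" using clq_Ac[OF K hK h1] gs by simp
      have f3: "\<not> Ac t h h2" using clq_Ac[OF K hK h2] gs by simp
      show False by (rule cycB[OF t lt(1,2,3) ht A01 A12 A02 ne[symmetric] f1 f2 f3])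
    qed
    then show ?thesis using h0 by blast
  qed
  have Fc: "{h. (c,h) \<in> K} = {h2}"
  proof -
    have "h = h2" if hK: "(c,h) \<in> K" for h
    proof (rule ccontr)
      assume ne: "h \<noteq> h2"
      have ht: "h < t" using hK clq_sub[OF K] by blast
      have f1: "Ac t h2 h" using clq_Ac[OF K h2 hK] ne by simp
      have f2: "Ac t h h1" using clq_Ac[OF K hK h1] gs Ac_sym[of s b c] by simp
      have f3: "\<not> Ac t h h0" using clq_Ac[OF K hK h0] gs Ac_sym[of s a c] by simp
      have g1: "Ac t h2 h1" using A12 Ac_sym by metis
      have g2: "Ac t h1 h0" using A01 Ac_sym by metis
      have g3: "\<not> Ac t h2 h0" using A02 Ac_sym by metis
      show False by (rule cycB[OF t lt(3,2,1) ht g1 g2 g3 ne[symmetric] f1 f2 f3])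
    qed
    then show ?thesis using h2 by blast
  qed
  show ?thesis using Fa Fb Fc unfolding a_def b_def c_def by simp
qed


lemma nbrs:
  assumes "s \<ge> 5" "x < s" "Ac s (Suc g mod s) x" "x \<noteq> Suc g mod s"
  shows "x = g mod s \<or> x = Suc (Suc g) mod s"
proof -
  have a: "g mod s < s" using assms by simp
  have b: "Suc g mod s = (if Suc (g mod s) = s then 0 else Suc (g mod s))" by (rule mod_Suc)
  have c: "Suc (Suc g) mod s = (if Suc (Suc g mod s) = s then 0 else Suc (Suc g mod s))" by (rule mod_Suc)
  have b': "Suc g mod s < s" using assms by simp
  show ?thesis using a b c b' assms by (auto simp: Ac_iff)
qed

lemma orient:
  assumes "t \<ge> 3" "p < t" "q < t" "p \<noteq> q" "Ac t p q"
  shows "q = Suc p mod t \<or> p = Suc q mod t"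
  using assms by (auto simp: Ac_iff mod_Suc)

lemma rot_sum:
  fixes f :: "nat \<Rightarrow> nat"
  assumes "c < s"
  shows "(\<Sum>i<s. f ((c+i) mod s)) = (\<Sum>g<s. f g)"
proof -
  have m: "(c+i) mod s = (if c+i < s then c+i else c+i-s)" if "i < s" for i
  proof (cases "c+i < s")
    case False
    then have "(c+i) mod s = (c+i-s) mod s" by (simp add: le_mod_geq)
    also have "\<dots> = c+i-s" using that assms by simp
    finally show ?thesis using False by simp
  qed simp
  have inj: "inj_on (\<lambda>i. (c+i) mod s) {..<s}"
    by (rule inj_onI) (auto simp: m split: if_splits)
  have sub: "(\<lambda>i. (c+i) mod s) ` {..<s} \<subseteq> {..<s}" using assms by auto
  have "(\<lambda>i. (c+i) mod s) ` {..<s} = {..<s}" using endo_inj_surj[OF _ sub inj] by simp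
  then have "bij_betw (\<lambda>i. (c+i) mod s) {..<s} {..<s}" using inj by (simp add: bij_betw_def)
  then show ?thesis by (rule sum.reindex_bij_betw)
qed

lemma card_sum:
  assumes K: "isclq s t K"
  shows "card K = (\<Sum>g<s. card {h. (g,h) \<in> K})"
proof -
  have "K = (SIGMA g:{..<s}. {h. (g,h) \<in> K})" using K unfolding isclq_def by auto
  moreover have "finite {h. (g,h) \<in> K}" for g
    by (rule finite_subset[of _ "{..<t}"]) (use K in \<open>auto simp: isclq_def\<close>)
  ultimately show ?thesis by (metis card_SigmaI finite_lessThan)
qed

lemma clq_swap:
  assumes K: "isclq s t K"
  shows "isclq t s (prod.swap ` K)" "card (prod.swap ` K) = card K"
    "\<And>h. {g. (h,g) \<in> prod.swap ` K} = {g. (g,h) \<in> K}"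
proof -
  show "isclq t s (prod.swap ` K)" using K unfolding isclq_def by (auto simp: Ac_sym)
  show "card (prod.swap ` K) = card K" by (simp add: card_image)
  show "\<And>h. {g. (h,g) \<in> prod.swap ` K} = {g. (g,h) \<in> K}" by force
qed


lemma fin_fib: "isclq s t K \<Longrightarrow> finite {h. (x,h) \<in> K}"
  by (rule finite_subset[of _ "{..<t}"]) (auto simp: isclq_def)

lemma isol:
  assumes K: "isclq s t K" and s: "s \<ge> 5" and t: "t \<ge> 5"
    and w2: "card {h. (Suc g mod s, h) \<in> K} = 2" and w0: "card {h. (g mod s, h) \<in> K} = 0"
    and w0': "card {h. (Suc (Suc g) mod s, h) \<in> K} = 0"
  shows "\<exists>k. card {x. (x, k mod t) \<in> K} = 0 \<and> card {x. (x, Suc k mod t) \<in> K} = 1 \<and>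
     card {x. (x, Suc (Suc k) mod t) \<in> K} = 1 \<and> card {x. (x, Suc (Suc (Suc k)) mod t) \<in> K} = 0"
proof -
  define a where "a = g mod s"
  define b where "b = Suc g mod s"
  define c where "c = Suc (Suc g) mod s"
  have Ea: "(a,h) \<notin> K" for h using w0 fin_fib[OF K, of a] unfolding a_def by auto
  have Ec: "(c,h) \<notin> K" for h using w0' fin_fib[OF K, of c] unfolding c_def by auto
  have nb: "\<not> Ac s x b" if xh: "(x,h) \<in> K" and xb: "x \<noteq> b" for x h
  proof
    assume A: "Ac s x b"
    have "x < s" using xh clq_sub[OF K] by blast
    then have "x = a \<or> x = c" using nbrs[OF s, of x g] A xb Ac_sym unfolding a_def b_def c_def by metis
    then show False using xh Ea Ec by blast
  qed
  obtain p q where pq: "{h. (b,h) \<in> K} = {p,q}" "p \<noteq> q" using w2 unfolding b_def card_2_iff by blast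
  have pK: "(b,p) \<in> K" and qK: "(b,q) \<in> K" using pq by blast+
  have lt: "p < t" "q < t" using pK qK clq_sub[OF K] by blast+
  have Apq: "Ac t p q" using clq_Ac[OF K pK qK] pq(2) by simp
  obtain p' q' where pq': "{h. (b,h) \<in> K} = {p',q'}" "q' = Suc p' mod t" "p' < t" "p' \<noteq> q'"
  proof -
    have "q = Suc p mod t \<or> p = Suc q mod t" using orient[OF _ lt pq(2) Apq] t by simp
    then show ?thesis
    proof
      assume "q = Suc p mod t" then show ?thesis using that[of p q] pq lt by blast
    next
      assume "p = Suc q mod t" then show ?thesis using that[of q p] pq lt by (metis insert_commute)
    qed
  qed
  have p'K: "(b,p') \<in> K" and q'K: "(b,q') \<in> K" using pq' by blast+
  define k where "k = p' + t - 1"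
  have k1: "Suc k mod t = p'" using pq'(3) t unfolding k_def by simp
  have k2: "Suc (Suc k) mod t = q'"
  proof -
    have e: "Suc (Suc k) = Suc p' + t" using t unfolding k_def by simp
    show ?thesis by (simp only: e mod_add_self2 pq'(2))
  qed
  have gk: "k mod t \<noteq> Suc k mod t" "k mod t \<noteq> Suc (Suc k) mod t" "Ac t (k mod t) (Suc k mod t)"
    using gside[OF t, of k] by auto
  have gk2: "Suc k mod t \<noteq> Suc (Suc (Suc k)) mod t" "Suc (Suc k) mod t \<noteq> Suc (Suc (Suc k)) mod t"
     "Ac t (Suc (Suc k) mod t) (Suc (Suc (Suc k)) mod t)"
    using gside[OF t, of "Suc k"] by auto
  have v1: "{x. (x, p') \<in> K} = {b}"
  proof -
    have "x = b" if xK: "(x,p') \<in> K" for x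
    proof (rule ccontr)
      assume xb: "x \<noteq> b"
      have "Ac s x b" using clq_Ac[OF K xK p'K] xb by simp
      then show False using nb[OF xK xb] by blast
    qed
    then show ?thesis using p'K by blast
  qed
  have v2: "{x. (x, q') \<in> K} = {b}"
  proof -
    have "x = b" if xK: "(x,q') \<in> K" for x
    proof (rule ccontr)
      assume xb: "x \<noteq> b"
      have "Ac s x b" using clq_Ac[OF K xK q'K] xb by simp
      then show False using nb[OF xK xb] by blast
    qed
    then show ?thesis using q'K by blast
  qed
  have v0: "{x. (x, k mod t) \<in> K} = {}"
  proof -
    have False if xK: "(x, k mod t) \<in> K" for x
    proof (cases "x = b")
      case True
      then have "k mod t \<in> {p',q'}" using xK pq'(1) by blast
      then show False using gk k1 k2 by auto
    next
      case False
      have "Ac t (k mod t) p'" using gk k1 by simp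
      then have "Ac s x b" using clq_Ac[OF K xK p'K] False by simp
      then show False using nb[OF xK False] by blast
    qed
    then show ?thesis by blast
  qed
  have v3: "{x. (x, Suc (Suc (Suc k)) mod t) \<in> K} = {}"
  proof -
    have False if xK: "(x, Suc (Suc (Suc k)) mod t) \<in> K" for x
    proof (cases "x = b")
      case True
      then have "Suc (Suc (Suc k)) mod t \<in> {p',q'}" using xK pq'(1) by blast
      then show False using gk2 k1 k2 by auto
    next
      case False
      have "Ac t (Suc (Suc (Suc k)) mod t) q'" using gk2 k2 Ac_sym by metis
      then have "Ac s x b" using clq_Ac[OF K xK q'K] False by simp
      then show False using nb[OF xK False] by blast
    qed
    then show ?thesis by blast
  qed
  show ?thesis using v0 v1 v2 v3 k1 k2 by (intro exI[of _ k]) simp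
qed

lemma Lf_last: "s \<ge> 1 \<Longrightarrow> Lf (s-1) = 4*(s div 3) + (if s mod 3 = 2 then 2 else 0)"
  by (cases s) (auto simp: Lf_def mod_Suc)

lemma Mf_last: "s \<ge> 1 \<Longrightarrow> Mf (s-1) = 4*(s div 3) + (if s mod 3 = 2 then 1 else 0)"
  by (cases s) (auto simp: Mf_def mod_Suc)

lemma s_le: "7 \<le> (s::nat) \<Longrightarrow> s \<le> 4 * (s div 3)"
proof -
  assume "7 \<le> s"
  moreover have "s = 3 * (s div 3) + s mod 3" "s mod 3 < 3" by simp_all
  ultimately show ?thesis by arith
qed


lemma bound_left:
  assumes K: "isclq s t K" and s: "7 \<le> s" and st: "s \<le> t"
  shows "card K \<le> 4*(s div 3) + (if s mod 3 = 0 \<or> s mod 3 = 1 then 0 else if s = t then 1 else 2)"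
proof -
  have s5: "s \<ge> 5" and t5: "t \<ge> 5" and t4: "t \<ge> 4" and s4: "s \<ge> 4" using s st by auto
  define w where "w = (\<lambda>g. card {h. (g,h) \<in> K})"
  define v where "v = (\<lambda>h. card {g. (g,h) \<in> K})"
  have cK: "card K = (\<Sum>g<s. w g)" using card_sum[OF K] unfolding w_def by simp
  note sw = clq_swap[OF K]
  have cKv: "card K = (\<Sum>h<t. v h)" using card_sum[OF sw(1)] sw(2,3) unfolding v_def by simp
  have wle: "w g \<le> 2" for g using fib_le2[OF K t4] unfolding w_def by simp
  have vle: "v h \<le> 2" for h using fib_le2[OF sw(1) s4, of h] sw(3) unfolding v_def by simp
  have wF2: "w (g mod s) = 1 \<and> w (Suc g mod s) = 1 \<and> w (Suc (Suc g) mod s) = 1"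
    if "0 < w (g mod s)" "0 < w (Suc g mod s)" "0 < w (Suc (Suc g) mod s)" for g
    using F2[OF K s5 t5, of g] that unfolding w_def by simp
  have vF2: "v (h mod t) = 1 \<and> v (Suc h mod t) = 1 \<and> v (Suc (Suc h) mod t) = 1"
    if "0 < v (h mod t)" "0 < v (Suc h mod t)" "0 < v (Suc (Suc h) mod t)" for h
    using F2[OF sw(1) t5 s5, of h] that sw(3) unfolding v_def by simp
  show ?thesis
  proof (cases "\<forall>g<s. 0 < w g")
    case True
    have one: "w g = 1" if g: "g < s" for g
    proof -
      have "0 < w (g mod s)" "0 < w (Suc g mod s)" "0 < w (Suc (Suc g) mod s)"
        using True g s5 by simp_all
      then show ?thesis using wF2[of g] g by simp
    qed
    have "card K = (\<Sum>g<s. 1)" unfolding cK by (rule sum.cong) (auto simp: one)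
    then have "card K = s" by simp
    then show ?thesis using s_le[OF s] by simp
  next
    case False
    then obtain g0 where g0: "g0 < s" "w g0 = 0" by auto
    define x where "x = (\<lambda>i. w ((g0 + Suc i) mod s))"
    have sS: "s = Suc (s-1)" using s by simp
    have rot: "card K = (\<Sum>i<s-1. x i)"
    proof -
      have "card K = (\<Sum>i<s. w ((g0+i) mod s))" using cK rot_sum[OF g0(1), of w] by simp
      also have "\<dots> = (\<Sum>i<Suc (s-1). w ((g0+i) mod s))" using sS by simp
      also have "\<dots> = w ((g0+0) mod s) + (\<Sum>i<s-1. w ((g0 + Suc i) mod s))"
        by (rule sum.lessThan_Suc_shift)
      also have "\<dots> = (\<Sum>i<s-1. x i)" using g0 unfolding x_def by simp
      finally show ?thesis .
    qed
    have xle: "\<And>i. x i \<le> 2" using wle unfolding x_def by simp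
    have xF2: "x i = 1 \<and> x (Suc i) = 1 \<and> x (Suc (Suc i)) = 1"
      if "0 < x i" "0 < x (Suc i)" "0 < x (Suc (Suc i))" for i
      using wF2[of "g0 + Suc i"] that unfolding x_def by simp
    have Lb: "(\<Sum>i<s-1. x i) \<le> Lf (s-1)" using Lbound[where x=x and n="s-1" and a=0, OF xle xF2] by simp
    have Lv: "Lf (s-1) = 4*(s div 3) + (if s mod 3 = 2 then 2 else 0)" using Lf_last s by simp
    have m3: "s mod 3 = 0 \<or> s mod 3 = 1 \<or> s mod 3 = 2" by arith
    show ?thesis
    proof (cases "s mod 3 = 2 \<and> s = t")
      case False
      then show ?thesis using rot Lb Lv m3 by auto
    next
      case True
      then have tt: "t = s" "s mod 3 = 2" by auto
      show ?thesis
      proof (cases "\<exists>g. w (Suc g mod s) = 2 \<and> w (g mod s) = 0 \<and> w (Suc (Suc g) mod s) = 0")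
        case True
        then obtain g where g: "w (Suc g mod s) = 2" "w (g mod s) = 0" "w (Suc (Suc g) mod s) = 0" by blast
        obtain k where k: "v (k mod t) = 0" "v (Suc k mod t) = 1" "v (Suc (Suc k) mod t) = 1"
            "v (Suc (Suc (Suc k)) mod t) = 0"
          using isol[OF K s5 t5, of g] g unfolding w_def v_def by blast
        define y where "y = (\<lambda>i. v ((k + i) mod t))"
        have kt: "k mod t < t" using t5 by simp
        have "card K = (\<Sum>i<t. v ((k mod t + i) mod t))" using cKv rot_sum[OF kt, of v] by simp
        also have "\<dots> = (\<Sum>i<t. y i)" unfolding y_def by (simp add: mod_add_left_eq)
        also have "\<dots> = (\<Sum>i<Suc (Suc (Suc (Suc (t-4)))). y (0+i))"
        proof -
          have tS: "Suc (Suc (Suc (Suc (t-4)))) = t" using t5 by simp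
          show ?thesis unfolding tS by simp
        qed
        also have "\<dots> = y 0 + (y (Suc 0) + (y (Suc (Suc 0)) + (y (Suc (Suc (Suc 0))) +
             (\<Sum>i<t-4. y (Suc (Suc (Suc (Suc 0))) + i)))))"
          by (simp only: split1)
        finally have cy: "card K = y 0 + (y (Suc 0) + (y (Suc (Suc 0)) + (y (Suc (Suc (Suc 0))) +
             (\<Sum>i<t-4. y (Suc (Suc (Suc (Suc 0))) + i)))))" .
        have yv: "y 0 = 0" "y (Suc 0) = 1" "y (Suc (Suc 0)) = 1" "y (Suc (Suc (Suc 0))) = 0"
          using k unfolding y_def by simp_all
        have yle: "\<And>i. y i \<le> 2" using vle unfolding y_def by simp
        have yF2: "y i = 1 \<and> y (Suc i) = 1 \<and> y (Suc (Suc i)) = 1"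
          if "0 < y i" "0 < y (Suc i)" "0 < y (Suc (Suc i))" for i
          using vF2[of "k + i"] that unfolding y_def by simp
        have "(\<Sum>i<t-4. y (Suc (Suc (Suc (Suc 0))) + i)) \<le> Lf (t-4)" by (rule Lbound[where x=y, OF yle yF2])
        moreover have "Lf (t-1) = 4 + Lf (t-4)"
        proof -
          have "t - 1 = Suc (Suc (Suc (t-4)))" using t5 by simp
          then show ?thesis using Lf3'[of "t-4"] by simp
        qed
        ultimately show ?thesis using cy yv Lv tt by simp
      next
        case False
        note nI = False
        have xNI: "0 < x i \<or> 0 < x (Suc (Suc i))" if "x (Suc i) = 2" for i
          using False that unfolding x_def by (auto simp: not_less)
        have left: "x 0 = 2 \<longrightarrow> 0 < x (Suc 0)"
        proof
          assume "x 0 = 2"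
          then have "w (Suc g0 mod s) = 2" unfolding x_def by simp
          moreover have "w (g0 mod s) = 0" using g0 by simp
          moreover have "\<not> (w (Suc g0 mod s) = 2 \<and> w (g0 mod s) = 0 \<and> w (Suc (Suc g0) mod s) = 0)"
          proof
            assume h: "w (Suc g0 mod s) = 2 \<and> w (g0 mod s) = 0 \<and> w (Suc (Suc g0) mod s) = 0"
            have "\<exists>g. w (Suc g mod s) = 2 \<and> w (g mod s) = 0 \<and> w (Suc (Suc g) mod s) = 0" using h by (rule exI)
            then show False using nI by blast
          qed
          ultimately have "w (Suc (Suc g0) mod s) \<noteq> 0" by simp
          then show "0 < x (Suc 0)" unfolding x_def by simp
        qed
        have right: "x (0 + (s-1)) = 0"
        proof -
          have "g0 + Suc (s-1) = g0 + s" using sS by simp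
          then show ?thesis using g0 unfolding x_def by simp
        qed
        have "(\<Sum>i<s-1. x (0+i)) \<le> Mf (s-1)" by (rule Mbound[where x=x, OF xle xF2 xNI left right])
        moreover have "Mf (s-1) = 4*(s div 3) + 1" using Mf_last[of s] s tt by simp
        ultimately show ?thesis using rot tt by simp
      qed
    qed
  qed
qed

lemma clique_bound:
  assumes K: "isclq s t K" and s: "7 \<le> s" and t: "7 \<le> t"
  shows "card K \<le> 4 * min (s div 3) (t div 3) +
     (if min s t mod 3 = 0 \<or> min s t mod 3 = 1 then 0 else if s = t then 1 else 2)"
proof (cases "s \<le> t")
  case True
  have "min (s div 3) (t div 3) = s div 3" using True by (simp add: div_le_mono min_def)
  then show ?thesis using bound_left[OF K s True] True by (simp add: min_def)
next
  case False
  note sw = clq_swap[OF K]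
  have "card K \<le> 4*(t div 3) + (if t mod 3 = 0 \<or> t mod 3 = 1 then 0 else if t = s then 1 else 2)"
    using bound_left[OF sw(1) t] False sw(2) by simp
  moreover have "min (s div 3) (t div 3) = t div 3" using False div_le_mono[of t s 3] by (simp add: min_def)
  ultimately show ?thesis using False by (auto simp: min_def)
qed


lemma blockeq: assumes "(i::nat) \<le> 1" "i' \<le> 1" shows "
  (3*k+i = 3*k'+i' \<or> 3*k+i = 3*k'+i'+1 \<or> 3*k'+i' = 3*k+i+1) \<longleftrightarrow> k = k'"
proof (cases k k' rule: linorder_cases)
  case less
  then have "3*k+3 \<le> 3*k'" by simp
  then show ?thesis using less assms by linarith
next
  case greater
  then have "3*k'+3 \<le> 3*k" by simp
  then show ?thesis using greater assms by linarith
qed (use assms in auto)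

lemma three_ne: "3*(a::nat) \<noteq> Suc (3*b)"
proof
  assume "3*a = Suc (3*b)"
  then have "(3*a) mod 3 = Suc (3*b) mod 3" by simp
  then show False by (simp add: mod_Suc)
qed

lemma Ac_small: "n \<ge> 3 \<Longrightarrow> a+2 \<le> n \<Longrightarrow> b+2 \<le> n \<Longrightarrow> Ac n a b \<longleftrightarrow> (a = b \<or> a = b+1 \<or> b = a+1)"
  by (subst Ac_iff) auto

lemma constr_left:
  assumes s: "7 \<le> s" and st: "s \<le> t"
  shows "\<exists>K. isclq s t K \<and> card K = 4*(s div 3) + (if s mod 3 = 0 \<or> s mod 3 = 1 then 0 else if s = t then 1 else 2)"
proof -
  define m where "m = s div 3"
  have sm: "s = 3*m + s mod 3" unfolding m_def by simp
  have m3: "3*m \<le> s" "s mod 3 = 2 \<Longrightarrow> s = 3*m+2" using sm by linarith+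
  define f where "f = (\<lambda>(k::nat,i::nat,j::nat). (3*k+i, 3*k+j))"
  define A where "A = {..<m} \<times> {0,1::nat} \<times> {0,1::nat}"
  define B where "B = f ` A"
  define X where "X = (if s mod 3 = 2 then (if s = t then {(3*m,3*m)} else {(3*m,3*m),(3*m,3*m+1)}) else {})"
  have memB: "p \<in> B \<longleftrightarrow> (\<exists>k i j. k < m \<and> i \<le> 1 \<and> j \<le> 1 \<and> p = (3*k+i, 3*k+j))" for p
    unfolding B_def A_def f_def by (auto simp: image_iff le_Suc_eq)
  have injf: "inj_on f A"
    unfolding A_def f_def by (rule inj_onI) (auto simp: three_ne three_ne[symmetric])
  have cA: "card A = m*4" unfolding A_def by (simp add: card_cartesian_product)
  have cB: "card B = 4*m" unfolding B_def using card_image[OF injf] cA by simp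
  have finB: "finite B" unfolding B_def A_def by simp
  have cX: "card X = (if s mod 3 = 0 \<or> s mod 3 = 1 then 0 else if s = t then 1 else 2)"
    unfolding X_def by auto
  have disj: "B \<inter> X = {}" unfolding X_def using memB by auto
  have cK: "card (B \<union> X) = 4*m + (if s mod 3 = 0 \<or> s mod 3 = 1 then 0 else if s = t then 1 else 2)"
    using card_Un_disjoint[OF finB _ disj] cB cX unfolding X_def by auto
  have Bsmall: "g + 2 \<le> s \<and> h + 2 \<le> t" if "(g,h) \<in> B" for g h
    using that m3 st unfolding memB by auto
  have isK: "isclq s t (B \<union> X)"
    unfolding isclq_def
  proof (intro conjI ballI impI)
    show "B \<union> X \<subseteq> {0..<s} \<times> {0..<t}"
    proof
      fix p assume "p \<in> B \<union> X"
      then show "p \<in> {0..<s} \<times> {0..<t}"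
      proof
        assume "p \<in> B" then show ?thesis using Bsmall by (cases p) force
      next
        assume "p \<in> X" then show ?thesis using m3 st unfolding X_def by (auto split: if_splits)
      qed
    qed
  next
    fix p q assume p: "p \<in> B \<union> X" and q: "q \<in> B \<union> X" and pq: "p \<noteq> q"
    show "Ac s (fst p) (fst q) = Ac t (snd p) (snd q)"
    proof (cases "p \<in> B")
      case pB: True
      then obtain k i j where pk: "k < m" "i \<le> 1" "j \<le> 1" "p = (3*k+i, 3*k+j)" using memB by blast
      show ?thesis
      proof (cases "q \<in> B")
        case True
        then obtain k' i' j' where qk: "k' < m" "i' \<le> 1" "j' \<le> 1" "q = (3*k'+i', 3*k'+j')" using memB by blast
        have "Ac s (fst p) (fst q) \<longleftrightarrow> k = k'"
          using Ac_small[of s "3*k+i" "3*k'+i'"] blockeq[of i i' k k'] pk qk m3 s by auto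
        moreover have "Ac t (snd p) (snd q) \<longleftrightarrow> k = k'"
          using Ac_small[of t "3*k+j" "3*k'+j'"] blockeq[of j j' k k'] pk qk m3 s st by auto
        ultimately show ?thesis by simp
      next
        case False
        then have qX: "q \<in> X" using q by blast
        then have sm: "s mod 3 = 2" and q1: "fst q = 3*m" and q2: "snd q = 3*m \<or> (snd q = 3*m+1 \<and> s \<noteq> t)"
          unfolding X_def by (auto split: if_splits)
        have ss: "s = 3*m+2" using m3 sm by simp
        have "\<not> Ac s (fst p) (fst q)" using pk q1 ss by (simp add: Ac_iff)
        moreover have "\<not> Ac t (snd p) (snd q)" using pk q2 ss st by (auto simp: Ac_iff)
        ultimately show ?thesis by simp
      qed
    next
      case pnB: False
      then have pX: "p \<in> X" using p by blast
      then have sm: "s mod 3 = 2" and p1: "fst p = 3*m" and p2: "snd p = 3*m \<or> (snd p = 3*m+1 \<and> s \<noteq> t)"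
        unfolding X_def by (auto split: if_splits)
      have ss: "s = 3*m+2" using m3 sm by simp
      show ?thesis
      proof (cases "q \<in> B")
        case True
        then obtain k' i' j' where qk: "k' < m" "i' \<le> 1" "j' \<le> 1" "q = (3*k'+i', 3*k'+j')" using memB by blast
        have "\<not> Ac s (fst p) (fst q)" using qk p1 ss by (simp add: Ac_iff)
        moreover have "\<not> Ac t (snd p) (snd q)" using qk p2 ss st by (auto simp: Ac_iff)
        ultimately show ?thesis by simp
      next
        case False
        then have qX: "q \<in> X" using q by blast
        have "s \<noteq> t" and "{p,q} = {(3*m,3*m),(3*m,3*m+1)}" using pX qX pq unfolding X_def by (auto split: if_splits)
        then show ?thesis using ss st by (auto simp: Ac_iff doubleton_eq_iff)
      qed
    qed
  qed
  show ?thesis using isK cK unfolding m_def by blast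
qed

lemma exists_clq:
  assumes s: "7 \<le> s" and t: "7 \<le> t"
  shows "\<exists>K. isclq s t K \<and> card K = 4 * min (s div 3) (t div 3) +
     (if min s t mod 3 = 0 \<or> min s t mod 3 = 1 then 0 else if s = t then 1 else 2)"
proof (cases "s \<le> t")
  case True
  obtain K where K: "isclq s t K" "card K = 4*(s div 3) + (if s mod 3 = 0 \<or> s mod 3 = 1 then 0 else if s = t then 1 else 2)"
    using constr_left[OF s True] by blast
  have "min (s div 3) (t div 3) = s div 3" using True by (simp add: div_le_mono min_def)
  then show ?thesis using K True by (intro exI[of _ K]) (simp add: min_def)
next
  case False
  obtain K where K: "isclq t s K" "card K = 4*(t div 3) + (if t mod 3 = 0 \<or> t mod 3 = 1 then 0 else if t = s then 1 else 2)"
  proof -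
    have ts: "t \<le> s" using False by simp
    show ?thesis using constr_left[OF t ts] that by blast
  qed
  note sw = clq_swap[OF K(1)]
  have "min (s div 3) (t div 3) = t div 3" using False div_le_mono[of t s 3] by (simp add: min_def)
  then show ?thesis using K sw False by (intro exI[of _ "prod.swap ` K"]) (auto simp: min_def)
qed

theorem mainTheorem10:
  fixes s t :: nat
  assumes "s \<ge> 7" and "t \<ge> 7"
  defines "r \<equiv> (if min s t mod 3 = 0 \<or> min s t mod 3 = 1 then 0
                 else if s = t then 1 else 2)"
  shows "int (sdim (modprod_V (cycle_V s) (cycle_V t)) (modprod_E (cycle_E s) (cycle_E t)))
         = int (s * t) - 4 * int (min (s div 3) (t div 3)) - int r"
proof -
  define w where "w = 4 * min (s div 3) (t div 3) + r"
  define V where "V = {0..<s} \<times> {0..<(t::nat)}"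
  define E where "E = modprod_E (cycle_E s) (cycle_E t)"
  have Vp: "modprod_V (cycle_V s) (cycle_V t) = V" unfolding V_def by (rule Vprod)
  have cV: "card V = s*t" unfolding V_def by simp
  have finV: "finite V" unfolding V_def by simp
  obtain K0 where K0: "isclq s t K0" "card K0 = w"
    using exists_clq[OF assms(1,2)] unfolding w_def r_def by blast
  have K0V: "K0 \<subseteq> V" using K0(1) unfolding isclq_def V_def by simp
  have wle: "w \<le> s*t" using card_mono[OF finV K0V] K0(2) cV by simp
  have lower: "s*t - w \<le> card S" if S: "strong_resolving_set V E S" for S
  proof -
    have SV: "S \<subseteq> V" using S unfolding strong_resolving_set_def by simp
    have R: "\<forall>x\<in>V - S. \<forall>y\<in>V - S. x \<noteq> y \<longrightarrow> E x y"
      using srs_iff[OF assms(1,2), of S] S SV unfolding V_def E_def by simp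
    have cl: "isclq s t (V - S)" unfolding isclq_def
    proof (intro conjI ballI impI)
      show "V - S \<subseteq> {0..<s} \<times> {0..<t}" unfolding V_def by blast
      fix p q assume p: "p \<in> V - S" and q: "q \<in> V - S" and pq: "p \<noteq> q"
      have "E p q" using R p q pq by blast
      then show "Ac s (fst p) (fst q) = Ac t (snd p) (snd q)" unfolding E_def
        by (cases p, cases q) (simp add: E_iff)
    qed
    have "card (V - S) \<le> w" using clique_bound[OF cl assms(1,2)] unfolding w_def r_def by simp
    moreover have "card (V - S) = card V - card S" using card_Diff_subset[OF finite_subset[OF SV finV] SV] .
    moreover have "card S \<le> card V" using card_mono[OF finV SV] .
    ultimately show ?thesis using cV by linarith
  qed
  have upper: "strong_resolving_set V E (V - K0)"
  proof -
    have "V - (V - K0) = K0" using K0V by blast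
    moreover have "\<forall>x\<in>K0. \<forall>y\<in>K0. x \<noteq> y \<longrightarrow> E x y"
    proof (intro ballI impI)
      fix x y assume x: "x \<in> K0" and y: "y \<in> K0" and xy: "x \<noteq> y"
      obtain g h g' h' where gh: "x = (g,h)" "y = (g',h')" by fastforce
      have "Ac s g g' = Ac t h h'" using clq_Ac[OF K0(1)] x y xy gh by blast
      then show "E x y" unfolding E_def using gh xy by (simp add: E_iff)
    qed
    ultimately show ?thesis using srs_iff[OF assms(1,2), of "V - K0"] unfolding V_def E_def by auto
  qed
  have cU: "card (V - K0) = s*t - w" using card_Diff_subset[OF finite_subset[OF K0V finV] K0V] K0(2) cV by simp
  have "sdim V E = s*t - w"
    unfolding sdim_def
  proof (rule Least_equality)
    show "\<exists>S. strong_resolving_set V E S \<and> card S = s*t - w" using upper cU by blast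
  next
    fix k assume "\<exists>S. strong_resolving_set V E S \<and> card S = k"
    then show "s*t - w \<le> k" using lower by blast
  qed
  then have "int (sdim (modprod_V (cycle_V s) (cycle_V t)) (modprod_E (cycle_E s) (cycle_E t))) = int (s*t - w)"
    unfolding Vp E_def by simp
  also have "\<dots> = int (s * t) - 4 * int (min (s div 3) (t div 3)) - int r"
    using wle unfolding w_def by (simp add: of_nat_diff)
  finally show ?thesis .
qed

end
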